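(* Let $(\Gamma,\tau)$ be a $z$-oriented triangulation of a connected closed $2$-dimensional surface. If $(\Gamma,\tau)$ has a face of type I, then the Markov chain $\mathcal{X}_{\tau}$ is ergodic.
   Context: A triangulation $\Gamma$ of a connected closed surface $M$ (not necessarily orientable) is a closed $2$-cell embedding of a connected finite simple graph in $M$ all of whose faces are triangles. Two edges are adjacent if distinct and in a common face; two faces are adjacent if distinct and their intersection is an edge. A zigzag is a sequence of edges $(e_i)_{i\in\mathbb{N}}$ such that for every $i$: $e_i,e_{i+1}$ are adjacent, the faces containing $e_i,e_{i+1}$ and $e_{i+1},e_{i+2}$ are adjacent, and $e_i,e_{i+2}$ are disjoint; it is a cyclic sequence, equivalently a cyclic vertex sequence $v_1,\dots,v_n$ with $e_i=v_iv_{i+1}$, traversing $e_i$ from $v_i$ to $v_{i+1}$. A $z$-orientation $\tau$ is a set of zigzags containing exactly one of $Z,Z^{-1}$ (reversed zigzag) for every zigzag $Z$. Every edge is traversed exactly twice in total by zigzags of $\tau$; it is of type I if in opposite directions, of type II if in the same direction (then regarded as directed that way). Each face has either two type I edges and one type II edge (face of type I) or three type II edges forming a directed cycle (face of type II). For $v\in V=\{v_1,\dots,v_n\}$ let $d(v)$ be the number of type I edges at $v$ plus twice the number of type II edges directed out of $v$. $\mathcal{X}_{\tau}$ is the time-homogeneous Markov chain on $V$ with $p_{ij}=1/d(v_i)$ if $v_iv_j$ is a type I edge, $p_{ij}=2/d(v_i)$ if $v_iv_j$ is a type II edge directed from $v_i$ to $v_j$, $p_{ij}=0$ otherwise. Ergodic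 means irreducible and aperiodic. *)

theory Defs
  imports Complex_Main
begin

text \<open>Every edge lies in exactly two faces, the faces around each vertex form a single
  cycle (connected vertex links), and the graph is connected.\<close>

definition link_rel :: "'a set set \<Rightarrow> 'a \<Rightarrow> ('a set \<times> 'a set) set" where
  "link_rel F v = {(f, g). f \<in> F \<and> g \<in> F \<and> f \<noteq> g \<and> v \<in> f \<inter> g \<and> card (f \<inter> g) = 2}"

definition triangulation :: "'a set \<Rightarrow> 'a set set \<Rightarrow> 'a set set \<Rightarrow> bool" where
  "triangulation V E F \<longleftrightarrow>
     finite V \<and> V \<noteq> {} \<and>
     (\<forall>e\<in>E. e \<subseteq> V \<and> card e = 2) \<and>
     (\<forall>f\<in>F. f \<subseteq> V \<and> card f = 3 \<and> (\<forall>e. e \<subseteq> f \<and> card e = 2 \<longrightarrow> e \<in> E)) \<and>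
     (\<forall>e\<in>E. card {f\<in>F. e \<subseteq> f} = 2) \<and>
     (\<forall>v\<in>V. (\<exists>f\<in>F. v \<in> f) \<and>
        (\<forall>f\<in>F. \<forall>g\<in>F. v \<in> f \<and> v \<in> g \<longrightarrow> (f, g) \<in> (link_rel F v)\<^sup>*)) \<and>
     (\<forall>u\<in>V. \<forall>v\<in>V. (u, v) \<in> {(x, y). {x, y} \<in> E}\<^sup>*)"

text \<open>A zigzag given by a cyclic vertex sequence xs = [v_1,...,v_n];
  edge e_i = v_i v_(i+1), indices modulo n.\<close>

definition zz_vert :: "'a list \<Rightarrow> nat \<Rightarrow> 'a" where
  "zz_vert xs i = xs ! (i mod length xs)"

definition zz_edge :: "'a list \<Rightarrow> nat \<Rightarrow> 'a set" where
  "zz_edge xs i = {zz_vert xs i, zz_vert xs (Suc i)}"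

definition zigzag_seq :: "'a set set \<Rightarrow> 'a set set \<Rightarrow> 'a list \<Rightarrow> bool" where
  "zigzag_seq E F xs \<longleftrightarrow> xs \<noteq> [] \<and>
     (\<forall>i. zz_edge xs i \<in> E \<and>
          zz_edge xs i \<noteq> zz_edge xs (i + 1) \<and>
          (\<exists>f\<in>F. zz_edge xs i \<subseteq> f \<and> zz_edge xs (i + 1) \<subseteq> f) \<and>
          (let f1 = zz_edge xs i \<union> zz_edge xs (i + 1);
               f2 = zz_edge xs (i + 1) \<union> zz_edge xs (i + 2)
           in f1 \<noteq> f2 \<and> f1 \<inter> f2 \<in> E) \<and>
          zz_edge xs i \<inter> zz_edge xs (i + 2) = {})"

text \<open>Cyclic sequences are taken with their minimal period (primitive lists),
  and a zigzag is the class of all rotations of such a list.\<close>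

definition primitive_list :: "'a list \<Rightarrow> bool" where
  "primitive_list xs \<longleftrightarrow> (\<forall>k. 0 < k \<and> k < length xs \<longrightarrow> rotate k xs \<noteq> xs)"

definition zigzags :: "'a set set \<Rightarrow> 'a set set \<Rightarrow> 'a list set set" where
  "zigzags E F = {range (\<lambda>k. rotate k xs) | xs. zigzag_seq E F xs \<and> primitive_list xs}"

definition zz_rev :: "'a list set \<Rightarrow> 'a list set" where
  "zz_rev Z = rev ` Z"

definition z_orientation :: "'a set set \<Rightarrow> 'a set set \<Rightarrow> 'a list set set \<Rightarrow> bool" where
  "z_orientation E F \<tau> \<longleftrightarrow> \<tau> \<subseteq> zigzags E F \<and>
     (\<forall>Z\<in>zigzags E F. card ({Z, zz_rev Z} \<inter> \<tau>) = 1)"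

definition zz_count :: "'a list set \<Rightarrow> 'a \<Rightarrow> 'a \<Rightarrow> nat" where
  "zz_count Z u v = (let xs = (SOME xs. xs \<in> Z) in
     card {i. i < length xs \<and> zz_vert xs i = u \<and> zz_vert xs (Suc i) = v})"

definition trav :: "'a list set set \<Rightarrow> 'a \<Rightarrow> 'a \<Rightarrow> nat" where
  "trav \<tau> u v = (\<Sum>Z\<in>\<tau>. zz_count Z u v)"

definition typeI_edge :: "'a set set \<Rightarrow> 'a list set set \<Rightarrow> 'a \<Rightarrow> 'a \<Rightarrow> bool" where
  "typeI_edge E \<tau> u v \<longleftrightarrow> {u, v} \<in> E \<and> trav \<tau> u v = 1 \<and> trav \<tau> v u = 1"

definition typeII_dir :: "'a set set \<Rightarrow> 'a list set set \<Rightarrow> 'a \<Rightarrow> 'a \<Rightarrow> bool" where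
  "typeII_dir E \<tau> u v \<longleftrightarrow> {u, v} \<in> E \<and> trav \<tau> u v = 2 \<and> trav \<tau> v u = 0"

definition face_typeI :: "'a set set \<Rightarrow> 'a list set set \<Rightarrow> 'a set \<Rightarrow> bool" where
  "face_typeI E \<tau> f \<longleftrightarrow>
     card {e\<in>E. e \<subseteq> f \<and> (\<exists>u v. e = {u, v} \<and> typeI_edge E \<tau> u v)} = 2 \<and>
     card {e\<in>E. e \<subseteq> f \<and> (\<exists>u v. e = {u, v} \<and> typeII_dir E \<tau> u v)} = 1"

definition mc_deg :: "'a set \<Rightarrow> 'a set set \<Rightarrow> 'a list set set \<Rightarrow> 'a \<Rightarrow> nat" where
  "mc_deg V E \<tau> v = card {u\<in>V. typeI_edge E \<tau> v u} + 2 * card {u\<in>V. typeII_dir E \<tau> v u}"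

definition mc_trans :: "'a set \<Rightarrow> 'a set set \<Rightarrow> 'a list set set \<Rightarrow> 'a \<Rightarrow> 'a \<Rightarrow> real" where
  "mc_trans V E \<tau> u v =
     (if typeI_edge E \<tau> u v then 1 / real (mc_deg V E \<tau> u)
      else if typeII_dir E \<tau> u v then 2 / real (mc_deg V E \<tau> u)
      else 0)"

fun mc_pow :: "'a set \<Rightarrow> ('a \<Rightarrow> 'a \<Rightarrow> real) \<Rightarrow> nat \<Rightarrow> 'a \<Rightarrow> 'a \<Rightarrow> real" where
  "mc_pow V P 0 u v = (if u = v then 1 else 0)"
| "mc_pow V P (Suc n) u v = (\<Sum>w\<in>V. P u w * mc_pow V P n w v)"

definition irreducible_chain :: "'a set \<Rightarrow> ('a \<Rightarrow> 'a \<Rightarrow> real) \<Rightarrow> bool" where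
  "irreducible_chain V P \<longleftrightarrow> (\<forall>u\<in>V. \<forall>v\<in>V. \<exists>n. mc_pow V P n u v > 0)"

definition aperiodic_chain :: "'a set \<Rightarrow> ('a \<Rightarrow> 'a \<Rightarrow> real) \<Rightarrow> bool" where
  "aperiodic_chain V P \<longleftrightarrow> (\<forall>v\<in>V. Gcd {n. 0 < n \<and> mc_pow V P n v v > 0} = 1)"

definition ergodic_chain :: "'a set \<Rightarrow> ('a \<Rightarrow> 'a \<Rightarrow> real) \<Rightarrow> bool" where
  "ergodic_chain V P \<longleftrightarrow> irreducible_chain V P \<and> aperiodic_chain V P"

end

theory Submission
  imports Defs
begin


definition per :: "(nat \<Rightarrow> 'a) \<Rightarrow> nat \<Rightarrow> bool" where
  "per s p \<longleftrightarrow> (\<forall>i. s (i + p) = s i)"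

lemma zz_vert_rotate: "xs \<noteq> [] \<Longrightarrow> zz_vert (rotate k xs) i = zz_vert xs (i + k)"
  unfolding zz_vert_def by (simp add: nth_rotate mod_add_right_eq add.commute)

lemma zz_vert_mod: "zz_vert xs (i mod length xs) = zz_vert xs i"
  unfolding zz_vert_def by simp

lemma zz_vert_per: "zz_vert xs (i + length xs * c) = zz_vert xs i"
  unfolding zz_vert_def by simp

lemma per_mult: "per s m \<Longrightarrow> s (i + m * c) = s i"
proof (induction c arbitrary: i)
  case 0 then show ?case by simp
next
  case (Suc c)
  have "s (i + m * Suc c) = s ((i + m * c) + m)" by (simp add: algebra_simps)
  also have "\<dots> = s (i + m * c)" using Suc.prems unfolding per_def by blast
  finally show ?case using Suc by simp
qed

lemma per_zz: "per (zz_vert xs) (length xs)"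
  unfolding per_def using zz_vert_per[of xs _ 1] by simp

lemma per_from:
  assumes "per s m" "0 < m" "\<And>k. s (j + k + p) = s (j + k)"
  shows "per s p"
  unfolding per_def
proof
  fix i
  have jm: "j \<le> i + m * j" using assms(2) by (simp add: trans_le_add2)
  have "s (i + p) = s (i + p + m * j)" using per_mult[OF assms(1)] by metis
  also have "i + p + m * j = j + (i + m * j - j) + p" using jm by simp
  also have "s \<dots> = s (j + (i + m * j - j))" using assms(3) by blast
  also have "j + (i + m * j - j) = i + m * j" using jm by simp
  also have "s \<dots> = s i" using per_mult[OF assms(1)] by metis
  finally show "s (i + p) = s i" .
qed

lemma list_eq_zz:
  assumes "length xs = length ys" "\<And>i. zz_vert xs i = zz_vert ys i"
  shows "xs = ys"
proof (rule nth_equalityI)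
  show "length xs = length ys" by fact
  fix i assume "i < length xs"
  then show "xs ! i = ys ! i" using assms(2)[of i] assms(1) unfolding zz_vert_def by simp
qed

lemma rotate_eq_iff_per:
  assumes "xs \<noteq> []"
  shows "rotate p xs = xs \<longleftrightarrow> per (zz_vert xs) p"
proof
  assume "rotate p xs = xs"
  then show "per (zz_vert xs) p" unfolding per_def using zz_vert_rotate[OF assms, of p] by metis
next
  assume "per (zz_vert xs) p"
  then show "rotate p xs = xs"
    by (intro list_eq_zz) (simp_all add: zz_vert_rotate[OF assms] per_def)
qed

lemma primitive_iff:
  assumes "xs \<noteq> []"
  shows "primitive_list xs \<longleftrightarrow> (\<forall>p. 0 < p \<and> p < length xs \<longrightarrow> \<not> per (zz_vert xs) p)"
  unfolding primitive_list_def using rotate_eq_iff_per[OF assms] by blast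

lemma primitive_rotate:
  assumes "xs \<noteq> []" "primitive_list xs"
  shows "primitive_list (rotate k xs)"
proof -
  have ne: "rotate k xs \<noteq> []" using assms by simp
  show ?thesis unfolding primitive_iff[OF ne]
  proof (intro allI impI)
    fix p assume p: "0 < p \<and> p < length (rotate k xs)"
    show "\<not> per (zz_vert (rotate k xs)) p"
    proof
      assume "per (zz_vert (rotate k xs)) p"
      then have h: "\<And>i. zz_vert xs (i + p + k) = zz_vert xs (i + k)"
        unfolding per_def zz_vert_rotate[OF assms(1)] by blast
      have "\<And>i. zz_vert xs (k + i + p) = zz_vert xs (k + i)"
      proof -
        fix i show "zz_vert xs (k + i + p) = zz_vert xs (k + i)"
          using h[of i] by (simp add: ac_simps)
      qed
      then have "per (zz_vert xs) p"
        using per_from[OF per_zz[of xs]] assms(1) by auto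
      then show False using assms p primitive_iff by auto
    qed
  qed
qed

lemma range_rotate_rotate:
  assumes "xs \<noteq> []"
  shows "range (\<lambda>k. rotate k (rotate j xs)) = range (\<lambda>k. rotate k xs)"
proof
  show "range (\<lambda>k. rotate k (rotate j xs)) \<subseteq> range (\<lambda>k. rotate k xs)"
    by (auto simp: rotate_rotate)
next
  show "range (\<lambda>k. rotate k xs) \<subseteq> range (\<lambda>k. rotate k (rotate j xs))"
  proof
    fix ys assume "ys \<in> range (\<lambda>k. rotate k xs)"
    then obtain k where k: "ys = rotate k xs" by blast
    have jn: "j \<le> length xs * j + k" using assms by (cases xs) auto
    have "rotate (length xs * j + k - j) (rotate j xs) = rotate (length xs * j + k) xs"
      using jn by (simp add: rotate_rotate)
    also have "\<dots> = rotate ((length xs * j + k) mod length xs) xs" by (rule rotate_conv_mod)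
    also have "\<dots> = rotate (k mod length xs) xs" by simp
    also have "\<dots> = rotate k xs" by (rule rotate_conv_mod[symmetric])
    finally show "ys \<in> range (\<lambda>k. rotate k (rotate j xs))" using k by (metis rangeI)
  qed
qed

lemma mod_rev_aux:
  assumes "0 < (n::nat)" "K mod n = n - 1" "i \<le> K"
  shows "(K - i) mod n = n - Suc (i mod n)"
proof -
  have "int ((K - i) mod n) = (int K - int i) mod int n"
    using assms(3) by (simp add: of_nat_mod of_nat_diff)
  also have "\<dots> = (int (K mod n) - int (i mod n)) mod int n"
    by (simp add: mod_diff_eq of_nat_mod)
  also have "\<dots> = int (n - Suc (i mod n))"
  proof -
    have r: "Suc (i mod n) \<le> n" using assms(1) by (simp add: Suc_leI)
    then have e: "int (n - Suc (i mod n)) = int n - 1 - int (i mod n)" by (simp add: of_nat_diff)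
    have "(int (K mod n) - int (i mod n)) mod int n = (int n - 1 - int (i mod n)) mod int n"
      using assms(1,2) by (simp add: of_nat_diff)
    also have "\<dots> = int n - 1 - int (i mod n)"
      using r by (intro mod_pos_pos_trivial) auto
    finally show ?thesis using e by simp
  qed
  finally show ?thesis by linarith
qed

lemma zz_vert_rev:
  assumes "xs \<noteq> []" "K mod length xs = length xs - 1" "i \<le> K"
  shows "zz_vert (rev xs) i = zz_vert xs (K - i)"
proof -
  have "i mod length xs < length xs" using assms(1) by simp
  then show ?thesis unfolding zz_vert_def
    using mod_rev_aux[of "length xs" K i] assms by (simp add: rev_nth)
qed



definition flags :: "'a set set \<Rightarrow> ('a \<times> 'a \<times> 'a) set" where
  "flags F = {(x, y, z). x \<noteq> y \<and> y \<noteq> z \<and> x \<noteq> z \<and> {x, y, z} \<in> F}"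

definition nxt :: "'a set set \<Rightarrow> 'a \<Rightarrow> 'a \<Rightarrow> 'a \<Rightarrow> 'a" where
  "nxt F x y z = (THE t. t \<noteq> x \<and> t \<noteq> y \<and> t \<noteq> z \<and> {y, z, t} \<in> F)"

definition stp :: "'a set set \<Rightarrow> 'a \<times> 'a \<times> 'a \<Rightarrow> 'a \<times> 'a \<times> 'a" where
  "stp F = (\<lambda>(x, y, z). (y, z, nxt F x y z))"

definition rfl :: "'a \<times> 'a \<times> 'a \<Rightarrow> 'a \<times> 'a \<times> 'a" where
  "rfl = (\<lambda>(x, y, z). (z, y, x))"

definition fl :: "(nat \<Rightarrow> 'a) \<Rightarrow> nat \<Rightarrow> 'a \<times> 'a \<times> 'a" where
  "fl s i = (s i, s (Suc i), s (Suc (Suc i)))"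

definition valid :: "'a set set \<Rightarrow> (nat \<Rightarrow> 'a) \<Rightarrow> bool" where
  "valid F s \<longleftrightarrow> (\<forall>i. fl s i \<in> flags F \<and> stp F (fl s i) = fl s (Suc i))"

lemma card3_decomp:
  assumes "card f = 3" "y \<in> f" "z \<in> f" "y \<noteq> z"
  shows "\<exists>t. f = {y, z, t} \<and> t \<noteq> y \<and> t \<noteq> z"
proof -
  have fin: "finite f" using assms(1) by (intro card_ge_0_finite) simp
  have "card (f - {y, z}) = 1" using assms fin by (simp add: card_Diff_subset)
  then obtain t where t: "f - {y, z} = {t}" by (meson card_1_singletonE)
  then have "f = {y, z, t}" using assms(2,3) by blast
  moreover have "t \<noteq> y \<and> t \<noteq> z" using t by blast
  ultimately show ?thesis by blast
qed

lemma card3_eq: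
  assumes "card f = 3" "{x, y, z} \<subseteq> f" "x \<noteq> y" "y \<noteq> z" "x \<noteq> z"
  shows "f = {x, y, z}"
proof -
  have fin: "finite f" using assms(1) by (intro card_ge_0_finite) simp
  have "card {x, y, z} = 3" using assms by simp
  then show ?thesis using card_subset_eq[OF fin assms(2)] assms(1) by simp
qed

locale ztri =
  fixes V :: "'a set" and E F :: "'a set set" and \<tau> :: "'a list set set"
  assumes tri: "triangulation V E F" and zo: "z_orientation E F \<tau>"
begin

lemma tparts1: "finite V" using tri unfolding triangulation_def by (elim conjE) assumption
lemma tparts2: "\<forall>e\<in>E. e \<subseteq> V \<and> card e = 2" using tri unfolding triangulation_def by (elim conjE) assumption
lemma tparts3: "\<forall>f\<in>F. f \<subseteq> V \<and> card f = 3 \<and> (\<forall>e. e \<subseteq> f \<and> card e = 2 \<longrightarrow> e \<in> E)"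
  using tri unfolding triangulation_def by (elim conjE) assumption
lemma tparts4: "\<forall>e\<in>E. card {f\<in>F. e \<subseteq> f} = 2" using tri unfolding triangulation_def by (elim conjE) assumption
lemma tparts5: "\<forall>u\<in>V. \<forall>v\<in>V. (u, v) \<in> {(x, y). {x, y} \<in> E}\<^sup>*"
  using tri unfolding triangulation_def by (elim conjE) assumption
lemmas tparts = tparts1 tparts2 tparts3 tparts4 tparts5
lemma finV: "finite V" using tparts(1) .
lemma edgeD: "e \<in> E \<Longrightarrow> e \<subseteq> V \<and> card e = 2" using tparts(2) by blast
lemma faceD: "f \<in> F \<Longrightarrow> f \<subseteq> V \<and> card f = 3 \<and> (\<forall>e. e \<subseteq> f \<and> card e = 2 \<longrightarrow> e \<in> E)"
  using tparts(3) by blast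
lemma edge2: "e \<in> E \<Longrightarrow> card {f\<in>F. e \<subseteq> f} = 2" using tparts(4) by blast
lemma conn: "u \<in> V \<Longrightarrow> v \<in> V \<Longrightarrow> (u, v) \<in> {(x, y). {x, y} \<in> E}\<^sup>*"
  using tparts(5) by blast

lemma flagD:
  assumes "(x, y, z) \<in> flags F"
  shows "x \<noteq> y" "y \<noteq> z" "x \<noteq> z" "{x, y, z} \<in> F"
    "{x, y} \<in> E" "{y, z} \<in> E" "{x, z} \<in> E" "x \<in> V" "y \<in> V" "z \<in> V"
proof -
  show xy: "x \<noteq> y" and yz: "y \<noteq> z" and xz: "x \<noteq> z" and f: "{x, y, z} \<in> F"
    using assms unfolding flags_def by auto
  have fe: "\<forall>e. e \<subseteq> {x, y, z} \<and> card e = 2 \<longrightarrow> e \<in> E" and sv: "{x, y, z} \<subseteq> V"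
    using faceD[OF f] by auto
  show "{x, y} \<in> E" using fe xy by auto
  show "{y, z} \<in> E" using fe yz by auto
  show "{x, z} \<in> E" using fe xz by auto
  show "x \<in> V" "y \<in> V" "z \<in> V" using sv by auto
qed

lemma flag_perm:
  assumes "(x, y, z) \<in> flags F"
  shows "(x, z, y) \<in> flags F" "(y, x, z) \<in> flags F" "(y, z, x) \<in> flags F"
    "(z, x, y) \<in> flags F" "(z, y, x) \<in> flags F"
proof -
  have e: "{x, z, y} = {x, y, z}" "{y, x, z} = {x, y, z}" "{y, z, x} = {x, y, z}"
    "{z, x, y} = {x, y, z}" "{z, y, x} = {x, y, z}" by blast+
  show "(x, z, y) \<in> flags F" "(y, x, z) \<in> flags F" "(y, z, x) \<in> flags F"
    "(z, x, y) \<in> flags F" "(z, y, x) \<in> flags F"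
    using assms unfolding flags_def by (simp_all only: e mem_Collect_eq case_prod_conv) blast+
qed

lemma three_faces:
  assumes "e \<in> E" "f1 \<in> F" "f2 \<in> F" "f3 \<in> F" "e \<subseteq> f1" "e \<subseteq> f2" "e \<subseteq> f3"
  shows "f1 = f2 \<or> f1 = f3 \<or> f2 = f3"
proof -
  obtain a b where ab: "{f\<in>F. e \<subseteq> f} = {a, b}" using edge2[OF assms(1)] by (meson card_2_iff)
  have "f1 \<in> {a, b}" "f2 \<in> {a, b}" "f3 \<in> {a, b}" using assms ab by blast+
  then show ?thesis by blast
qed

lemma nxt_ex:
  assumes "(x, y, z) \<in> flags F"
  shows "\<exists>t. t \<noteq> x \<and> t \<noteq> y \<and> t \<noteq> z \<and> {y, z, t} \<in> F"
proof -
  have e: "{y, z} \<in> E" and f: "{x, y, z} \<in> F" and yz: "y \<noteq> z" using flagD[OF assms] by auto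
  have "\<exists>a b. {f\<in>F. {y, z} \<subseteq> f} = {a, b} \<and> a \<noteq> b" using edge2[OF e] by (simp only: card_2_iff)
  then obtain a b where ab: "{f\<in>F. {y, z} \<subseteq> f} = {a, b}" "a \<noteq> b" by blast
  have ain: "a \<in> {f\<in>F. {y, z} \<subseteq> f}" "b \<in> {f\<in>F. {y, z} \<subseteq> f}" unfolding ab(1) by simp_all
  define g where "g = (if a = {x, y, z} then b else a)"
  have g: "g \<in> F" "{y, z} \<subseteq> g" "g \<noteq> {x, y, z}" using ain ab(2) unfolding g_def by auto
  obtain t where t: "g = {y, z, t}" "t \<noteq> y" "t \<noteq> z"
    using card3_decomp[of g y z] faceD[OF g(1)] g(2) yz by auto
  have "t \<noteq> x"
  proof
    assume "t = x"
    then have "g = {x, y, z}" using t(1) by blast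
    then show False using g(3) by blast
  qed
  then show ?thesis using t g(1) by blast
qed

lemma nxt_uniq:
  assumes "(x, y, z) \<in> flags F"
    and "t \<noteq> x" "t \<noteq> y" "t \<noteq> z" "{y, z, t} \<in> F"
    and "t' \<noteq> x" "t' \<noteq> y" "t' \<noteq> z" "{y, z, t'} \<in> F"
  shows "t = t'"
proof -
  have e: "{y, z} \<in> E" and f: "{x, y, z} \<in> F" using flagD[OF assms(1)] by auto
  have "{x, y, z} = {y, z, t} \<or> {x, y, z} = {y, z, t'} \<or> {y, z, t} = {y, z, t'}"
    using three_faces[OF e f assms(5) assms(9)] by auto
  moreover have "{x, y, z} \<noteq> {y, z, t}" using assms(2-4) by blast
  moreover have "{x, y, z} \<noteq> {y, z, t'}" using assms(6-8) by blast
  ultimately have "{y, z, t} = {y, z, t'}" by blast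
  then show ?thesis using assms(3,4) by blast
qed

lemma nxt_props:
  assumes "(x, y, z) \<in> flags F"
  shows "nxt F x y z \<noteq> x" "nxt F x y z \<noteq> y" "nxt F x y z \<noteq> z" "{y, z, nxt F x y z} \<in> F"
proof -
  have "\<exists>!t. t \<noteq> x \<and> t \<noteq> y \<and> t \<noteq> z \<and> {y, z, t} \<in> F"
    using nxt_ex[OF assms] nxt_uniq[OF assms] by blast
  from theI'[OF this] show "nxt F x y z \<noteq> x" "nxt F x y z \<noteq> y" "nxt F x y z \<noteq> z" "{y, z, nxt F x y z} \<in> F"
    unfolding nxt_def by blast+
qed

lemma nxt_eq:
  assumes "(x, y, z) \<in> flags F" "t \<noteq> x" "t \<noteq> y" "t \<noteq> z" "{y, z, t} \<in> F"
  shows "nxt F x y z = t"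
  using nxt_uniq[OF assms(1) nxt_props[OF assms(1)] assms(2-5)] .

lemma stp_flags:
  assumes "(x, y, z) \<in> flags F"
  shows "stp F (x, y, z) = (y, z, nxt F x y z)" "(y, z, nxt F x y z) \<in> flags F"
  using nxt_props[OF assms] flagD[OF assms] unfolding stp_def flags_def by auto

lemma stp_in: "\<phi> \<in> flags F \<Longrightarrow> stp F \<phi> \<in> flags F"
  using stp_flags by (cases \<phi>) auto

lemma face_cases:
  assumes "(x, y, z) \<in> flags F" "(a, y, z) \<in> flags F"
  shows "a = x \<or> a = nxt F x y z"
proof (cases "a = x")
  case False
  have "{y, z, a} = {a, y, z}" by blast
  then have fa: "{y, z, a} \<in> F" using flagD(4)[OF assms(2)] by simp
  have "nxt F x y z = a" using nxt_eq[OF assms(1) False flagD(1)[OF assms(2)] flagD(3)[OF assms(2)] fa] .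
  then show ?thesis by simp
qed simp

lemma nxt_back:
  assumes "(x, y, z) \<in> flags F"
  shows "nxt F (nxt F x y z) y z = x"
proof -
  let ?t = "nxt F x y z"
  have tf: "(?t, y, z) \<in> flags F" using flag_perm(4)[OF stp_flags(2)[OF assms]] .
  have "{y, z, x} = {x, y, z}" by blast
  then have "{y, z, x} \<in> F" using flagD(4)[OF assms] by simp
  moreover have "x \<noteq> ?t" using nxt_props(1)[OF assms] by simp
  ultimately show ?thesis using nxt_eq[OF tf, of x] flagD(1,3)[OF assms] by simp
qed

lemma stp_inj:
  assumes "\<phi> \<in> flags F" "\<psi> \<in> flags F" "stp F \<phi> = stp F \<psi>"
  shows "\<phi> = \<psi>"
proof -
  obtain x y z where p: "\<phi> = (x, y, z)" by (cases \<phi>) auto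
  obtain a b c where q: "\<psi> = (a, b, c)" by (cases \<psi>) auto
  have f1: "(x, y, z) \<in> flags F" and f2: "(a, b, c) \<in> flags F" using assms p q by auto
  have s1: "stp F \<phi> = (y, z, nxt F x y z)" using p stp_flags(1)[OF f1] by simp
  have s2: "stp F \<psi> = (b, c, nxt F a b c)" using q stp_flags(1)[OF f2] by simp
  have "(y, z, nxt F x y z) = (b, c, nxt F a b c)" using assms(3) s1 s2 by auto
  then have bc: "b = y" "c = z" and n: "nxt F x y z = nxt F a y z" by auto
  have f2': "(a, y, z) \<in> flags F" using f2 bc by simp
  have "a = x"
  proof (rule ccontr)
    assume "a \<noteq> x"
    then have "a = nxt F x y z" using face_cases[OF f1 f2'] by blast
    then have "nxt F a y z = x" using nxt_back[OF f1] by simp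
    then have "nxt F x y z = x" using n by (simp only: )
    then show False using nxt_props(1)[OF f1] by contradiction
  qed
  then show ?thesis using p q bc by simp
qed

lemma stp_rfl:
  assumes "\<phi> \<in> flags F"
  shows "stp F (rfl (stp F \<phi>)) = rfl \<phi>" "rfl \<phi> \<in> flags F"
proof -
  obtain x y z where p: "\<phi> = (x, y, z)" by (cases \<phi>) auto
  have f: "(x, y, z) \<in> flags F" using assms p by simp
  let ?t = "nxt F x y z"
  have tf: "(?t, z, y) \<in> flags F" using flag_perm(5)[OF stp_flags(2)[OF f]] .
  have "{z, y, x} = {x, y, z}" by blast
  then have "{z, y, x} \<in> F" using flagD(4)[OF f] by simp
  moreover have "x \<noteq> ?t" using nxt_props(1)[OF f] by simp
  ultimately have "nxt F ?t z y = x" using nxt_eq[OF tf, of x] flagD(1,3)[OF f] by simp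
  then show "stp F (rfl (stp F \<phi>)) = rfl \<phi>"
    using p stp_flags(1)[OF f] stp_flags(1)[OF tf] by (simp add: rfl_def)
  show "rfl \<phi> \<in> flags F" using p flag_perm(5)[OF f] by (simp add: rfl_def)
qed

lemma finite_flags: "finite (flags F)"
proof -
  have "flags F \<subseteq> V \<times> V \<times> V"
    using flagD(8-10) by auto
  then show ?thesis using finV by (simp add: finite_subset)
qed

end


context ztri begin

lemma fl_shift: "fl (\<lambda>i. s (i + k)) i = fl s (i + k)" unfolding fl_def by simp

lemma valid_shift: "valid F s \<Longrightarrow> valid F (\<lambda>i. s (i + k))"
  unfolding valid_def fl_shift by simp

lemma valid_det:
  assumes "valid F s" "valid F t" "fl s i = fl t j"
  shows "fl s (i + k) = fl t (j + k)"
proof (induction k)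
  case 0 then show ?case using assms(3) by simp
next
  case (Suc k)
  have "fl s (i + Suc k) = stp F (fl s (i + k))" using assms(1) unfolding valid_def by simp
  also have "\<dots> = stp F (fl t (j + k))" using Suc.IH by simp
  also have "\<dots> = fl t (j + Suc k)" using assms(2) unfolding valid_def by simp
  finally show ?case .
qed

lemma valid_det_val:
  assumes "valid F s" "valid F t" "fl s i = fl t j"
  shows "s (i + k) = t (j + k)"
  using valid_det[OF assms, of k] unfolding fl_def by simp

lemma fl_per: "per s n \<Longrightarrow> fl s (i + n * c) = fl s i"
proof -
  assume p: "per s n"
  have "s (i + n * c) = s i" "s (Suc i + n * c) = s (Suc i)" "s (Suc (Suc i) + n * c) = s (Suc (Suc i))"
    using per_mult[OF p] by blast+
  then show ?thesis unfolding fl_def by simp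
qed

lemma edge_ne: "{a, b} \<in> E \<Longrightarrow> a \<noteq> b"
  using edgeD[of "{a, b}"] by (cases "a = b") auto

lemma zz_valid:
  assumes "zigzag_seq E F xs"
  shows "valid F (zz_vert xs)"
  unfolding valid_def
proof
  fix i
  let ?s = "zz_vert xs"
  define a where "a = ?s i"
  define b where "b = ?s (Suc i)"
  define c where "c = ?s (Suc (Suc i))"
  define d where "d = ?s (Suc (Suc (Suc i)))"
  have z0: "\<forall>j. zz_edge xs j \<in> E \<and> zz_edge xs j \<noteq> zz_edge xs (j + 1) \<and>
          (\<exists>f\<in>F. zz_edge xs j \<subseteq> f \<and> zz_edge xs (j + 1) \<subseteq> f) \<and>
          (zz_edge xs j \<union> zz_edge xs (j + 1) \<noteq> zz_edge xs (j + 1) \<union> zz_edge xs (j + 2) \<and>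
           (zz_edge xs j \<union> zz_edge xs (j + 1)) \<inter> (zz_edge xs (j + 1) \<union> zz_edge xs (j + 2)) \<in> E) \<and>
          zz_edge xs j \<inter> zz_edge xs (j + 2) = {}"
    using assms unfolding zigzag_seq_def Let_def by (rule conjunct2)
  note z = spec[OF z0]
  have e0: "zz_edge xs i = {a, b}" and e1: "zz_edge xs (i + 1) = {b, c}" and e2: "zz_edge xs (i + 2) = {c, d}"
    and e1': "zz_edge xs (Suc i) = {b, c}" and e2': "zz_edge xs (Suc i + 1) = {c, d}"
    and e2'': "zz_edge xs (Suc (Suc i)) = {c, d}" and e3: "zz_edge xs (Suc i + 2) = {d, ?s (Suc (Suc (Suc (Suc i))))}"
    unfolding zz_edge_def a_def b_def c_def d_def by (simp_all add: numeral_2_eq_2)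
  have ab: "{a, b} \<in> E" using z[of i] e0 by simp
  have bc: "{b, c} \<in> E" using z[of "Suc i"] e1' by simp
  have cd: "{c, d} \<in> E" using z[of "Suc (Suc i)"] e2'' by simp
  have "a \<noteq> b" "b \<noteq> c" "c \<noteq> d" using edge_ne ab bc cd by auto
  moreover have "{a, b} \<noteq> {b, c}" using z[of i] e0 e1 by simp
  then have "a \<noteq> c" by blast
  moreover have "{b, c} \<noteq> {c, d}" using z[of "Suc i"] e1' e2' by simp
  then have "b \<noteq> d" by blast
  moreover have "{a, b} \<inter> {c, d} = {}" using z[of i] e0 e2 by simp
  then have "a \<noteq> d" by blast
  ultimately have ne: "a \<noteq> b" "b \<noteq> c" "c \<noteq> d" "a \<noteq> c" "b \<noteq> d" "a \<noteq> d" by auto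
  obtain f where f: "f \<in> F" "{a, b} \<subseteq> f" "{b, c} \<subseteq> f" using z[of i] e0 e1 by auto
  have "f = {a, b, c}" using card3_eq[of f a b c] faceD[OF f(1)] f ne by auto
  then have fa: "{a, b, c} \<in> F" using f(1) by simp
  obtain g where g: "g \<in> F" "{b, c} \<subseteq> g" "{c, d} \<subseteq> g" using z[of "Suc i"] e1' e2' by auto
  have "g = {b, c, d}" using card3_eq[of g b c d] faceD[OF g(1)] g ne by auto
  then have gb: "{b, c, d} \<in> F" using g(1) by simp
  have fl0: "fl ?s i = (a, b, c)" unfolding fl_def a_def b_def c_def by simp
  have fl1: "fl ?s (Suc i) = (b, c, d)" unfolding fl_def b_def c_def d_def by simp
  have af: "(a, b, c) \<in> flags F" unfolding flags_def using fa ne by simp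
  have "nxt F a b c = d" using nxt_eq[OF af] ne gb by auto
  then show "fl ?s i \<in> flags F \<and> stp F (fl ?s i) = fl ?s (Suc i)"
    using af fl0 fl1 stp_flags(1)[OF af] by simp
qed

lemma valid_zz:
  assumes "xs \<noteq> []" "valid F (zz_vert xs)"
  shows "zigzag_seq E F xs"
  unfolding zigzag_seq_def Let_def
proof (rule conjI[OF assms(1)], rule allI)
  fix i
  let ?s = "zz_vert xs"
  define a where "a = ?s i"
  define b where "b = ?s (Suc i)"
  define c where "c = ?s (Suc (Suc i))"
  define d where "d = ?s (Suc (Suc (Suc i)))"
  have e0: "zz_edge xs i = {a, b}" and e1: "zz_edge xs (i + 1) = {b, c}" and e2: "zz_edge xs (i + 2) = {c, d}"
    unfolding zz_edge_def a_def b_def c_def d_def by (simp_all add: numeral_2_eq_2)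
  have fl0: "fl ?s i = (a, b, c)" unfolding fl_def a_def b_def c_def by simp
  have fl1: "fl ?s (Suc i) = (b, c, d)" unfolding fl_def b_def c_def d_def by simp
  have af: "(a, b, c) \<in> flags F" using assms(2) fl0 unfolding valid_def by metis
  have "stp F (a, b, c) = (b, c, d)" using assms(2) fl0 fl1 unfolding valid_def by metis
  then have dn: "d = nxt F a b c" using stp_flags(1)[OF af] by simp
  have ne: "a \<noteq> b" "b \<noteq> c" "a \<noteq> c" "d \<noteq> a" "d \<noteq> b" "d \<noteq> c"
    using flagD(1-3)[OF af] nxt_props(1-3)[OF af] dn by auto
  have fa: "{a, b, c} \<in> F" using flagD(4)[OF af] .
  have gb: "{b, c, d} \<in> F" using nxt_props(4)[OF af] dn by simp
  have "{a, b} \<in> E" using flagD(5)[OF af] .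
  moreover have "{a, b} \<noteq> {b, c}" using ne by (simp add: doubleton_eq_iff)
  moreover have "\<exists>f\<in>F. {a, b} \<subseteq> f \<and> {b, c} \<subseteq> f" using fa by (intro bexI[of _ "{a, b, c}"]) auto
  moreover have "{a, b} \<union> {b, c} \<noteq> {b, c} \<union> {c, d}"
  proof
    assume eq: "{a, b} \<union> {b, c} = {b, c} \<union> {c, d}"
    have "d \<in> {b, c} \<union> {c, d}" by simp
    then have "d \<in> {a, b} \<union> {b, c}" using eq by simp
    then show False using ne by simp
  qed
  moreover have "({a, b} \<union> {b, c}) \<inter> ({b, c} \<union> {c, d}) = {b, c}" using ne by auto
  moreover have "{b, c} \<in> E" using flagD(6)[OF af] .
  moreover have "{a, b} \<inter> {c, d} = {}" using ne by auto
  ultimately show "zz_edge xs i \<in> E \<and> zz_edge xs i \<noteq> zz_edge xs (i + 1) \<and>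
          (\<exists>f\<in>F. zz_edge xs i \<subseteq> f \<and> zz_edge xs (i + 1) \<subseteq> f) \<and>
          (zz_edge xs i \<union> zz_edge xs (i + 1) \<noteq> zz_edge xs (i + 1) \<union> zz_edge xs (i + 2) \<and>
          (zz_edge xs i \<union> zz_edge xs (i + 1)) \<inter> (zz_edge xs (i + 1) \<union> zz_edge xs (i + 2)) \<in> E) \<and>
          zz_edge xs i \<inter> zz_edge xs (i + 2) = {}"
    unfolding e0 e1 e2 by simp
qed

end


definition rep :: "'a list set \<Rightarrow> 'a list" where
  "rep Z = (SOME xs. xs \<in> Z)"

definition inZ :: "'a list set \<Rightarrow> 'a \<times> 'a \<times> 'a \<Rightarrow> bool" where
  "inZ Z \<phi> \<longleftrightarrow> (\<exists>i. fl (zz_vert (rep Z)) i = \<phi>)"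

lemma zz_vert_rotate_fun: "xs \<noteq> [] \<Longrightarrow> zz_vert (rotate k xs) = (\<lambda>i. zz_vert xs (i + k))"
  using zz_vert_rotate by fastforce

context ztri begin

lemma zz_class:
  assumes "Z \<in> zigzags E F" "xs \<in> Z"
  shows "xs \<noteq> []" "valid F (zz_vert xs)" "primitive_list xs" "Z = range (\<lambda>k. rotate k xs)"
    "zigzag_seq E F xs"
proof -
  obtain xs0 where x0: "Z = range (\<lambda>k. rotate k xs0)" "zigzag_seq E F xs0" "primitive_list xs0"
    using assms(1) unfolding zigzags_def by blast
  have ne0: "xs0 \<noteq> []" using x0(2) unfolding zigzag_seq_def by simp
  obtain j where j: "xs = rotate j xs0" using assms(2) x0(1) by blast
  show ne: "xs \<noteq> []" using j ne0 by simp
  show v: "valid F (zz_vert xs)" using valid_shift[OF zz_valid[OF x0(2)]] j zz_vert_rotate_fun[OF ne0] by simp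
  show "primitive_list xs" using primitive_rotate[OF ne0 x0(3)] j by simp
  show "Z = range (\<lambda>k. rotate k xs)" using range_rotate_rotate[OF ne0] x0(1) j by simp
  show "zigzag_seq E F xs" using valid_zz[OF ne v] .
qed

lemma rep_in: "Z \<in> zigzags E F \<Longrightarrow> rep Z \<in> Z"
  unfolding rep_def zigzags_def by (rule someI_ex) blast

lemma rep_props:
  assumes "Z \<in> zigzags E F"
  shows "rep Z \<noteq> []" "valid F (zz_vert (rep Z))" "primitive_list (rep Z)"
    "Z = range (\<lambda>k. rotate k (rep Z))" "zigzag_seq E F (rep Z)"
  using zz_class[OF assms rep_in[OF assms]] by blast+

lemma inZ_iff:
  assumes "Z \<in> zigzags E F" "xs \<in> Z"
  shows "inZ Z \<phi> \<longleftrightarrow> (\<exists>i. fl (zz_vert xs) i = \<phi>)"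
proof -
  have ne: "xs \<noteq> []" using zz_class(1)[OF assms] .
  obtain j where j: "rep Z = rotate j xs" using rep_in[OF assms(1)] zz_class(4)[OF assms] by blast
  have r: "zz_vert (rep Z) = (\<lambda>i. zz_vert xs (i + j))" using j zz_vert_rotate_fun[OF ne] by simp
  show ?thesis
  proof
    assume "inZ Z \<phi>"
    then obtain i where "fl (zz_vert (rep Z)) i = \<phi>" unfolding inZ_def by blast
    then have "fl (zz_vert xs) (i + j) = \<phi>" unfolding r fl_shift .
    then show "\<exists>i. fl (zz_vert xs) i = \<phi>" by blast
  next
    assume "\<exists>i. fl (zz_vert xs) i = \<phi>"
    then obtain i where i: "fl (zz_vert xs) i = \<phi>" by blast
    have jl: "j \<le> i + length xs * j" using ne by (cases xs) auto
    have "fl (zz_vert (rep Z)) (i + length xs * j - j) = fl (zz_vert xs) (i + length xs * j)"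
      unfolding r fl_shift using jl by simp
    also have "\<dots> = \<phi>" using fl_per[OF per_zz[of xs]] i by simp
    finally show "inZ Z \<phi>" unfolding inZ_def by blast
  qed
qed

lemma len_pos: "xs \<noteq> [] \<Longrightarrow> 0 < length xs" by simp

lemma uniq_sub:
  assumes Z: "Z \<in> zigzags E F" and Z': "Z' \<in> zigzags E F" and "inZ Z \<phi>" "inZ Z' \<phi>"
  shows "Z \<subseteq> Z'"
proof -
  let ?xs = "rep Z" and ?ys = "rep Z'"
  let ?s = "zz_vert ?xs" and ?t = "zz_vert ?ys"
  have nx: "?xs \<noteq> []" and vx: "valid F ?s" and px: "primitive_list ?xs" and rx: "Z = range (\<lambda>k. rotate k ?xs)"
    using rep_props[OF Z] by auto
  have ny: "?ys \<noteq> []" and vy: "valid F ?t" and py: "primitive_list ?ys" and ry: "Z' = range (\<lambda>k. rotate k ?ys)"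
    using rep_props[OF Z'] by auto
  obtain i where i: "fl ?s i = \<phi>" using assms(3) unfolding inZ_def by blast
  obtain j where j: "fl ?t j = \<phi>" using assms(4) unfolding inZ_def by blast
  have st: "\<And>k. ?s (i + k) = ?t (j + k)" using valid_det_val[OF vx vy] i j by simp
  have ts: "\<And>k. ?t (j + k) = ?s (i + k)" using st by simp
  let ?n = "length ?xs" and ?m = "length ?ys"
  have ps: "per ?s ?n" and pt: "per ?t ?m" using per_zz by blast+
  have "per ?t ?n"
  proof (rule per_from[OF pt len_pos[OF ny]])
    fix k
    have "?t (j + k + ?n) = ?s (i + (k + ?n))" using ts[of "k + ?n"] by (simp add: add.assoc)
    also have "\<dots> = ?s (i + k)" using ps unfolding per_def by (metis add.assoc)
    also have "\<dots> = ?t (j + k)" using st by simp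
    finally show "?t (j + k + ?n) = ?t (j + k)" .
  qed
  then have nm: "\<not> ?n < ?m" using px py primitive_iff[OF ny] len_pos[OF nx] by blast
  have "per ?s ?m"
  proof (rule per_from[OF ps len_pos[OF nx]])
    fix k
    have "?s (i + k + ?m) = ?t (j + (k + ?m))" using st[of "k + ?m"] by (simp add: add.assoc)
    also have "\<dots> = ?t (j + k)" using pt unfolding per_def by (metis add.assoc)
    also have "\<dots> = ?s (i + k)" using ts by simp
    finally show "?s (i + k + ?m) = ?s (i + k)" .
  qed
  then have mn: "\<not> ?m < ?n" using px primitive_iff[OF nx] len_pos[OF ny] by blast
  have eqlen: "?n = ?m" using nm mn by simp
  show "Z \<subseteq> Z'"
  proof
    fix x assume "x \<in> Z"
    then obtain k where k: "x = rotate k ?xs" using rx by blast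
    define c where "c = j + (k + ?n * i - i)"
    have il: "i \<le> k + ?n * i" using nx by (cases ?xs) auto
    have "rotate k ?xs = rotate c ?ys"
    proof (rule list_eq_zz)
      show "length (rotate k ?xs) = length (rotate c ?ys)" using eqlen by simp
      fix q
      have "zz_vert (rotate c ?ys) q = ?t (j + (q + k + ?n * i - i))"
        unfolding zz_vert_rotate[OF ny] c_def using il by (simp add: algebra_simps)
      also have "\<dots> = ?s (i + (q + k + ?n * i - i))" using ts by simp
      also have "i + (q + k + ?n * i - i) = (q + k) + ?n * i" using il by simp
      also have "?s \<dots> = ?s (q + k)" using per_mult[OF ps] by blast
      also have "\<dots> = zz_vert (rotate k ?xs) q" unfolding zz_vert_rotate[OF nx] ..
      finally show "zz_vert (rotate k ?xs) q = zz_vert (rotate c ?ys) q" by simp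
    qed
    then show "x \<in> Z'" using k ry by blast
  qed
qed

lemma uniq:
  assumes "Z \<in> zigzags E F" "Z' \<in> zigzags E F" "inZ Z \<phi>" "inZ Z' \<phi>"
  shows "Z = Z'"
  using uniq_sub[OF assms] uniq_sub[OF assms(2,1,4,3)] by blast

lemma count_flag:
  assumes Z: "Z \<in> zigzags E F"
  shows "card {i. i < length (rep Z) \<and> fl (zz_vert (rep Z)) i = \<psi>} = (if inZ Z \<psi> then 1 else 0)"
proof -
  let ?xs = "rep Z" let ?s = "zz_vert ?xs" let ?n = "length ?xs"
  have nx: "?xs \<noteq> []" and vx: "valid F ?s" and px: "primitive_list ?xs"
    using rep_props[OF Z] by auto
  have amo: "i = j" if ij: "i < j" "j < ?n" "fl ?s i = \<psi>" "fl ?s j = \<psi>" for i j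
  proof -
    have st: "\<And>k. ?s (i + k) = ?s (j + k)" using valid_det_val[OF vx vx] ij by simp
    have "per ?s (j - i)"
    proof (rule per_from[OF per_zz len_pos[OF nx]])
      fix k show "?s (i + k + (j - i)) = ?s (i + k)" using st[of k] ij(1) by (simp add: algebra_simps)
    qed
    then show ?thesis using px primitive_iff[OF nx] ij by auto
  qed
  have amo': "i = j" if "i < ?n" "j < ?n" "fl ?s i = \<psi>" "fl ?s j = \<psi>" for i j
    using amo[of i j] amo[of j i] that by (cases "i < j"; cases "j < i") auto
  show ?thesis
  proof (cases "inZ Z \<psi>")
    case True
    then obtain i where i: "fl ?s i = \<psi>" unfolding inZ_def by blast
    have "fl ?s (i mod ?n + ?n * (i div ?n)) = fl ?s (i mod ?n)" using fl_per[OF per_zz] by blast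
    then have i0: "fl ?s (i mod ?n) = \<psi>" using i by simp
    have lt: "i mod ?n < ?n" using nx by simp
    have "{i. i < ?n \<and> fl ?s i = \<psi>} = {i mod ?n}" using amo' i0 lt by blast
    then show ?thesis using True by simp
  next
    case False
    then have "{i. i < ?n \<and> fl ?s i = \<psi>} = {}" unfolding inZ_def by blast
    then show ?thesis using False by simp
  qed
qed

lemma zz_count_rep: "zz_count Z y z = card {i. i < length (rep Z) \<and> zz_vert (rep Z) i = y \<and> zz_vert (rep Z) (Suc i) = z}"
  unfolding zz_count_def rep_def Let_def ..

lemma zz_count_split:
  assumes Z: "Z \<in> zigzags E F" and f: "(x, y, z) \<in> flags F"
  shows "zz_count Z y z = (if inZ Z (y, z, x) then 1 else 0) + (if inZ Z (y, z, nxt F x y z) then 1 else 0)"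
proof -
  let ?xs = "rep Z" let ?s = "zz_vert ?xs" let ?n = "length ?xs"
  have vx: "valid F ?s" using rep_props[OF Z] by auto
  let ?A = "{i. i < ?n \<and> fl ?s i = (y, z, x)}" and ?B = "{i. i < ?n \<and> fl ?s i = (y, z, nxt F x y z)}"
  have "{i. i < ?n \<and> ?s i = y \<and> ?s (Suc i) = z} = ?A \<union> ?B"
  proof (rule set_eqI, rule iffI)
    fix i assume "i \<in> {i. i < ?n \<and> ?s i = y \<and> ?s (Suc i) = z}"
    then have i: "i < ?n" "?s i = y" "?s (Suc i) = z" by auto
    have "fl ?s i \<in> flags F" using vx unfolding valid_def by blast
    then have "(y, z, ?s (Suc (Suc i))) \<in> flags F" using i unfolding fl_def by simp
    then have "(?s (Suc (Suc i)), y, z) \<in> flags F" using flag_perm(4) by blast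
    then have "?s (Suc (Suc i)) = x \<or> ?s (Suc (Suc i)) = nxt F x y z" using face_cases[OF f] by blast
    then show "i \<in> ?A \<union> ?B" using i unfolding fl_def by auto
  next
    fix i assume "i \<in> ?A \<union> ?B"
    then show "i \<in> {i. i < ?n \<and> ?s i = y \<and> ?s (Suc i) = z}" unfolding fl_def by auto
  qed
  moreover have "?A \<inter> ?B = {}" using nxt_props(1)[OF f] by auto
  ultimately have "zz_count Z y z = card ?A + card ?B"
    unfolding zz_count_rep by (simp add: card_Un_disjoint)
  then show ?thesis using count_flag[OF Z] by simp
qed

lemma inZ_stp:
  assumes Z: "Z \<in> zigzags E F" and f: "\<phi> \<in> flags F"
  shows "inZ Z (stp F \<phi>) \<longleftrightarrow> inZ Z \<phi>"
proof -
  let ?xs = "rep Z" let ?s = "zz_vert ?xs" let ?n = "length ?xs"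
  have nx: "?xs \<noteq> []" and vx: "valid F ?s" using rep_props[OF Z] by auto
  show ?thesis
  proof
    assume "inZ Z (stp F \<phi>)"
    then obtain i where i: "fl ?s i = stp F \<phi>" unfolding inZ_def by blast
    define j where "j = i + ?n - 1"
    have sj: "Suc j = i + ?n * 1" unfolding j_def using nx by (cases ?xs) auto
    have "stp F (fl ?s j) = fl ?s (Suc j)" using vx unfolding valid_def by blast
    also have "\<dots> = fl ?s i" unfolding sj using fl_per[OF per_zz] by blast
    finally have "stp F (fl ?s j) = stp F \<phi>" using i by simp
    moreover have "fl ?s j \<in> flags F" using vx unfolding valid_def by blast
    ultimately have "fl ?s j = \<phi>" using stp_inj f by blast
    then show "inZ Z \<phi>" unfolding inZ_def by blast
  next
    assume "inZ Z \<phi>"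
    then obtain i where i: "fl ?s i = \<phi>" unfolding inZ_def by blast
    have "fl ?s (Suc i) = stp F \<phi>" using vx i unfolding valid_def by metis
    then show "inZ Z (stp F \<phi>)" unfolding inZ_def by blast
  qed
qed

lemma tau_sub: "\<tau> \<subseteq> zigzags E F" using zo unfolding z_orientation_def by blast

lemma finite_zigzags: "finite (zigzags E F)"
proof (rule inj_on_finite[OF _ _ finite_flags])
  show "inj_on (\<lambda>Z. fl (zz_vert (rep Z)) 0) (zigzags E F)"
    by (rule inj_onI) (metis inZ_def uniq)
  show "(\<lambda>Z. fl (zz_vert (rep Z)) 0) ` zigzags E F \<subseteq> flags F"
    using rep_props(2) unfolding valid_def by blast
qed

lemma finite_tau: "finite \<tau>" using finite_subset[OF tau_sub finite_zigzags] .

definition S :: "'a \<times> 'a \<times> 'a \<Rightarrow> bool" where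
  "S \<psi> \<longleftrightarrow> (\<exists>Z\<in>\<tau>. inZ Z \<psi>)"

lemma sum_ind: "(\<Sum>Z\<in>\<tau>. (if inZ Z \<psi> then 1 else 0) :: nat) = (if S \<psi> then 1 else 0)"
proof (cases "S \<psi>")
  case True
  then obtain Z0 where Z0: "Z0 \<in> \<tau>" "inZ Z0 \<psi>" unfolding S_def by blast
  have "(\<Sum>Z\<in>\<tau>. (if inZ Z \<psi> then 1 else 0) :: nat) = (\<Sum>Z\<in>\<tau>. (if Z = Z0 then 1 else 0))"
  proof (rule sum.cong[OF refl])
    fix Z assume "Z \<in> \<tau>"
    then have "inZ Z \<psi> \<longleftrightarrow> Z = Z0" using uniq tau_sub Z0 by blast
    then show "(if inZ Z \<psi> then 1 else 0 :: nat) = (if Z = Z0 then 1 else 0)" by simp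
  qed
  also have "\<dots> = 1" using Z0(1) finite_tau by simp
  finally show ?thesis using True by simp
next
  case False
  then show ?thesis unfolding S_def by simp
qed

lemma trav_split:
  assumes f: "(x, y, z) \<in> flags F"
  shows "trav \<tau> y z = (if S (y, z, x) then 1 else 0) + (if S (x, y, z) then 1 else 0)"
proof -
  have "trav \<tau> y z = (\<Sum>Z\<in>\<tau>. (if inZ Z (y, z, x) then 1 else 0) + (if inZ Z (x, y, z) then 1 else 0))"
    unfolding trav_def
  proof (rule sum.cong[OF refl])
    fix Z assume Z: "Z \<in> \<tau>"
    then have Zz: "Z \<in> zigzags E F" using tau_sub by blast
    have "inZ Z (y, z, nxt F x y z) \<longleftrightarrow> inZ Z (x, y, z)"
      using inZ_stp[OF Zz f] stp_flags(1)[OF f] by simp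
    then show "zz_count Z y z = (if inZ Z (y, z, x) then 1 else 0) + (if inZ Z (x, y, z) then 1 else 0)"
      using zz_count_split[OF Zz f] by simp
  qed
  also have "\<dots> = (if S (y, z, x) then 1 else 0) + (if S (x, y, z) then 1 else 0)"
    by (simp add: sum.distrib sum_ind)
  finally show ?thesis .
qed

end


lemma Kmod: "0 < (n::nat) \<Longrightarrow> 0 < c \<Longrightarrow> (n * c - 1) mod n = n - 1"
proof -
  assume n: "0 < n" and c: "0 < c"
  have eq: "n * c - 1 = (n - 1) + n * (c - 1)" using n c by (cases c) (auto simp: algebra_simps)
  have "(n * c - 1) mod n = ((n - 1) + n * (c - 1)) mod n" using eq by (rule arg_cong)
  also have "\<dots> = (n - 1) mod n" by (rule mod_mult_self2)
  also have "\<dots> = n - 1" using n by simp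
  finally show ?thesis .
qed

lemma fst_stp: "fst (stp F \<phi>) = fst (snd \<phi>)" and snd_stp: "fst (snd (stp F \<phi>)) = snd (snd \<phi>)"
  unfolding stp_def by (cases \<phi>; auto)+

lemma rev_range:
  assumes "xs \<noteq> []"
  shows "rev ` range (\<lambda>k. rotate k xs) = range (\<lambda>k. rotate k (rev xs))"
proof
  let ?n = "length xs"
  have n: "0 < ?n" using assms by simp
  show "rev ` range (\<lambda>k. rotate k xs) \<subseteq> range (\<lambda>k. rotate k (rev xs))"
  proof
    fix ys assume "ys \<in> rev ` range (\<lambda>k. rotate k xs)"
    then obtain k where k: "ys = rev (rotate k xs)" by blast
    define r where "r = k mod ?n"
    have r: "r < ?n" using n unfolding r_def by simp
    define c where "c = ?n - r"
    have "(?n - c mod ?n) mod ?n = r"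
    proof (cases "r = 0")
      case True then show ?thesis unfolding c_def by simp
    next
      case False then have "c mod ?n = c" unfolding c_def using r by simp
      then show ?thesis unfolding c_def using r False by simp
    qed
    then have "rotate (?n - c mod ?n) xs = rotate k xs"
      by (metis r_def rotate_conv_mod)
    then have "rotate c (rev xs) = ys" using k rotate_rev[of c xs] by simp
    then show "ys \<in> range (\<lambda>k. rotate k (rev xs))" by (metis rangeI)
  qed
next
  show "range (\<lambda>k. rotate k (rev xs)) \<subseteq> rev ` range (\<lambda>k. rotate k xs)"
    using rotate_rev by fastforce
qed

lemma rev_prim:
  assumes "xs \<noteq> []" "primitive_list xs"
  shows "primitive_list (rev xs)"
  unfolding primitive_list_def
proof (intro allI impI)
  fix p assume p: "0 < p \<and> p < length (rev xs)"
  show "rotate p (rev xs) \<noteq> rev xs"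
  proof
    assume "rotate p (rev xs) = rev xs"
    then have "rev (rotate (length xs - p) xs) = rev xs" using rotate_rev[of p xs] p by simp
    then have "rotate (length xs - p) xs = xs" by simp
    moreover have "0 < length xs - p" "length xs - p < length xs" using p by auto
    ultimately show False using assms(2) unfolding primitive_list_def by blast
  qed
qed

context ztri begin

lemma exists_zz:
  assumes f: "\<phi> \<in> flags F"
  shows "\<exists>xs. zigzag_seq E F xs \<and> primitive_list xs \<and> fl (zz_vert xs) 0 = \<phi>"
proof -
  define g where "g k = (stp F ^^ k) \<phi>" for k
  have gS: "g (Suc k) = stp F (g k)" for k by (simp add: g_def)
  have gin: "g k \<in> flags F" for k by (induction k) (simp_all add: g_def stp_in f)
  have gback: "g (a + c) = g a \<Longrightarrow> g c = \<phi>" for a c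
  proof (induction a)
    case 0 then show ?case by (simp add: g_def)
  next
    case (Suc a)
    have "stp F (g (a + c)) = stp F (g a)" using Suc.prems gS by simp
    then have "g (a + c) = g a" using stp_inj gin by blast
    then show ?case using Suc.IH by blast
  qed
  let ?N = "card (flags F)"
  have "\<not> inj_on g {..?N}"
  proof
    assume "inj_on g {..?N}"
    then have "card (g ` {..?N}) = Suc ?N" by (simp add: card_image)
    moreover have "card (g ` {..?N}) \<le> ?N" using gin finite_flags by (intro card_mono) auto
    ultimately show False by simp
  qed
  then obtain a b where ab: "a \<noteq> b" "g a = g b" unfolding inj_on_def by blast
  have "\<exists>p. 0 < p \<and> g p = \<phi>"
  proof (cases "a < b")
    case True
    then have "g (a + (b - a)) = g a" using ab by simp
    then show ?thesis using gback True by (metis zero_less_diff)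
  next
    case False
    then have "b < a" using ab by simp
    then have "g (b + (a - b)) = g b" using ab by simp
    then show ?thesis using gback \<open>b < a\<close> by (metis zero_less_diff)
  qed
  define n where "n = (LEAST p. 0 < p \<and> g p = \<phi>)"
  have n: "0 < n" "g n = \<phi>" using LeastI_ex[OF \<open>\<exists>p. 0 < p \<and> g p = \<phi>\<close>] unfolding n_def by auto
  have nmin: "\<not> (0 < p \<and> g p = \<phi>)" if "p < n" for p using not_less_Least[OF that[unfolded n_def]] by blast
  have pg: "per g n" unfolding per_def
  proof
    fix i show "g (i + n) = g i" using n(2) unfolding g_def by (simp add: funpow_add)
  qed
  define s where "s k = fst (g k)" for k
  have gfl: "g k = fl s k" for k
  proof -
    have "fst (snd (g k)) = s (Suc k)" unfolding s_def gS fst_stp ..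
    moreover have "snd (snd (g k)) = s (Suc (Suc k))" unfolding s_def gS fst_stp snd_stp ..
    ultimately show ?thesis unfolding fl_def s_def by (simp add: prod_eq_iff)
  qed
  define xs where "xs = map s [0..<n]"
  have ne: "xs \<noteq> []" using n(1) unfolding xs_def by simp
  have len: "length xs = n" unfolding xs_def by simp
  have zs: "zz_vert xs = s"
  proof
    fix i
    have "zz_vert xs i = s (i mod n)" unfolding zz_vert_def len unfolding xs_def using n(1) by simp
    also have "g (i mod n) = g (i mod n + n * (i div n))" using per_mult[OF pg] by metis
    then have "s (i mod n) = s i" unfolding s_def by simp
    finally show "zz_vert xs i = s i" .
  qed
  have v: "valid F (zz_vert xs)" unfolding zs valid_def using gin gS gfl by metis
  have pr: "primitive_list xs" unfolding primitive_iff[OF ne] len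
  proof (intro allI impI)
    fix p assume p: "0 < p \<and> p < n"
    show "\<not> per (zz_vert xs) p"
    proof
      assume "per (zz_vert xs) p"
      then have ps: "\<And>i. s (i + p) = s i" unfolding zs per_def by blast
      have "fl s p = fl s 0" unfolding fl_def using ps[of 0] ps[of 1] ps[of 2] by (simp add: add.commute numeral_2_eq_2)
      then have "g p = \<phi>" using gfl[of p] gfl[of 0] by (simp add: g_def)
      then show False using nmin p by blast
    qed
  qed
  have "fl (zz_vert xs) 0 = \<phi>" unfolding zs using gfl[of 0] by (simp add: g_def)
  then show ?thesis using valid_zz[OF ne v] pr by blast
qed

lemma rev_valid:
  assumes ne: "xs \<noteq> []" and v: "valid F (zz_vert xs)"
  shows "valid F (zz_vert (rev xs))"
  unfolding valid_def
proof
  fix i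
  let ?n = "length xs" let ?s = "zz_vert xs" let ?r = "zz_vert (rev xs)"
  have n: "0 < ?n" using ne by simp
  define K where "K = ?n * (i + 4) - 1"
  have Km: "K mod ?n = ?n - 1" unfolding K_def using Kmod n by simp
  have Kge: "i + 3 \<le> K" unfolding K_def using n by (cases ?n) (auto simp: algebra_simps)
  define m where "m = K - i - 3"
  have r0: "?r i = ?s (Suc (Suc (Suc m)))" using zz_vert_rev[OF ne Km] Kge unfolding m_def
    by (simp add: Suc_diff_Suc numeral_3_eq_3)
  have r1: "?r (Suc i) = ?s (Suc (Suc m))" using zz_vert_rev[OF ne Km, of "Suc i"] Kge unfolding m_def
    by (simp add: Suc_diff_Suc numeral_3_eq_3)
  have r2: "?r (Suc (Suc i)) = ?s (Suc m)" using zz_vert_rev[OF ne Km, of "Suc (Suc i)"] Kge unfolding m_def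
    by (simp add: Suc_diff_Suc numeral_3_eq_3)
  have r3: "?r (Suc (Suc (Suc i))) = ?s m" using zz_vert_rev[OF ne Km, of "Suc (Suc (Suc i))"] Kge unfolding m_def
    by (simp add: numeral_3_eq_3)
  have f0: "fl ?r i = rfl (fl ?s (Suc m))" unfolding fl_def rfl_def using r0 r1 r2 by simp
  have f1: "fl ?r (Suc i) = rfl (fl ?s m)" unfolding fl_def rfl_def using r1 r2 r3 by simp
  have fm: "fl ?s m \<in> flags F" and st: "stp F (fl ?s m) = fl ?s (Suc m)" using v unfolding valid_def by blast+
  have "fl ?s (Suc m) \<in> flags F" using v unfolding valid_def by blast
  then have "fl ?r i \<in> flags F" using f0 stp_rfl(2) by simp
  moreover have "stp F (fl ?r i) = fl ?r (Suc i)" unfolding f0 f1 st[symmetric] using stp_rfl(1)[OF fm] .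
  ultimately show "fl ?r i \<in> flags F \<and> stp F (fl ?r i) = fl ?r (Suc i)" by blast
qed

lemma rev_flag:
  assumes ne: "xs \<noteq> []" and f: "fl (zz_vert xs) 0 = \<phi>"
  shows "\<exists>i. fl (zz_vert (rev xs)) i = rfl \<phi>"
proof -
  let ?n = "length xs" let ?s = "zz_vert xs" let ?r = "zz_vert (rev xs)"
  have n: "0 < ?n" using ne by simp
  define K where "K = ?n * 3 - 1"
  have Km: "K mod ?n = ?n - 1" unfolding K_def using Kmod n by simp
  have Kge: "2 \<le> K" unfolding K_def using n by (cases ?n) (auto simp: algebra_simps)
  have "?r (K - 2) = ?s 2" using zz_vert_rev[OF ne Km, of "K - 2"] Kge by simp
  moreover have "?r (Suc (K - 2)) = ?s 1" using zz_vert_rev[OF ne Km, of "Suc (K - 2)"] Kge by simp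
  moreover have "?r (Suc (Suc (K - 2))) = ?s 0" using zz_vert_rev[OF ne Km, of "Suc (Suc (K - 2))"] Kge by simp
  ultimately have "fl ?r (K - 2) = rfl (fl ?s 0)" unfolding fl_def rfl_def by (simp add: numeral_2_eq_2)
  then show ?thesis using f by blast
qed

lemma no_self_rev:
  assumes Z: "Z \<in> zigzags E F"
  shows "zz_rev Z \<noteq> Z"
proof
  assume eq: "zz_rev Z = Z"
  let ?xs = "rep Z" let ?s = "zz_vert ?xs" let ?n = "length ?xs"
  have ne: "?xs \<noteq> []" and v: "valid F ?s" and rZ: "Z = range (\<lambda>k. rotate k ?xs)" using rep_props[OF Z] by auto
  have n: "0 < ?n" using ne by simp
  have "rev ?xs \<in> zz_rev Z" unfolding zz_rev_def using rep_in[OF Z] by blast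
  then have "rev ?xs \<in> Z" using eq by simp
  then obtain j where j: "rev ?xs = rotate j ?xs" using rZ by blast
  define K where "K = ?n * (j + 5) - 1"
  have Km: "K mod ?n = ?n - 1" unfolding K_def using Kmod n by simp
  have Kge: "j + 4 \<le> K" unfolding K_def using n by (cases ?n) (auto simp: algebra_simps)
  define L where "L = K + j"
  have sym: "?s t = ?s (L - t)" if "j \<le> t" "t \<le> L" for t
  proof -
    have "?s t = zz_vert (rotate j ?xs) (t - j)" using zz_vert_rotate[OF ne] that by simp
    also have "\<dots> = zz_vert (rev ?xs) (t - j)" using j by simp
    also have "\<dots> = ?s (K - (t - j))" using zz_vert_rev[OF ne Km] that unfolding L_def by simp
    also have "K - (t - j) = L - t" using that unfolding L_def by simp
    finally show ?thesis .
  qed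
  have flg: "fl ?s i \<in> flags F" for i using v unfolding valid_def by blast
  obtain m where m: "L = 2 * m \<or> L = 2 * m + 1" by (metis odd_two_times_div_two_succ even_two_times_div_two)
  have Lge: "2 * j + 4 \<le> L" using Kge unfolding L_def by simp
  show False
  proof (cases "L = 2 * m")
    case True
    have le: "j \<le> Suc m" "Suc m \<le> L" "L - Suc m = m - 1" "0 < m" using True Lge by linarith+
    have e: "?s (Suc m) = ?s (m - 1)" using sym[OF le(1,2)] le(3) by simp
    have sm: "Suc (m - 1) = m" using le(4) by simp
    have "(?s (m - 1), ?s m, ?s (Suc m)) \<in> flags F" using flg[of "m - 1"] unfolding fl_def sm .
    then have "?s (m - 1) \<noteq> ?s (Suc m)" by (rule flagD(3))
    then show False using e by simp
  next
    case False
    then have L: "L = 2 * m + 1" using m by simp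
    have le: "j \<le> Suc m" "Suc m \<le> L" "L - Suc m = m" using L Lge by linarith+
    have e: "?s (Suc m) = ?s m" using sym[OF le(1,2)] le(3) by simp
    have "(?s m, ?s (Suc m), ?s (Suc (Suc m))) \<in> flags F" using flg[of m] unfolding fl_def .
    then have "?s m \<noteq> ?s (Suc m)" by (rule flagD(1))
    then show False using e by simp
  qed
qed

lemma S_rfl:
  assumes f: "\<phi> \<in> flags F"
  shows "S (rfl \<phi>) \<longleftrightarrow> \<not> S \<phi>"
proof -
  obtain xs where xs: "zigzag_seq E F xs" "primitive_list xs" "fl (zz_vert xs) 0 = \<phi>"
    using exists_zz[OF f] by blast
  have ne: "xs \<noteq> []" using xs(1) unfolding zigzag_seq_def by simp
  define Z0 where "Z0 = range (\<lambda>k. rotate k xs)"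
  have Z0: "Z0 \<in> zigzags E F" unfolding zigzags_def Z0_def using xs by blast
  have x0: "xs \<in> Z0" unfolding Z0_def by (metis rangeI rotate0 id_apply)
  have i0: "inZ Z0 \<phi>" using inZ_iff[OF Z0 x0] xs(3) by blast
  have Z1eq: "zz_rev Z0 = range (\<lambda>k. rotate k (rev xs))" unfolding zz_rev_def Z0_def using rev_range[OF ne] .
  have rne: "rev xs \<noteq> []" using ne by simp
  have rv: "valid F (zz_vert (rev xs))" using rev_valid[OF ne zz_valid[OF xs(1)]] .
  have Z1: "zz_rev Z0 \<in> zigzags E F" unfolding zigzags_def Z1eq
    using valid_zz[OF rne rv] rev_prim[OF ne xs(2)] by blast
  have x1: "rev xs \<in> zz_rev Z0" unfolding Z1eq by (metis rangeI rotate0 id_apply)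
  have i1: "inZ (zz_rev Z0) (rfl \<phi>)" using inZ_iff[OF Z1 x1] rev_flag[OF ne xs(3)] by blast
  have neq: "Z0 \<noteq> zz_rev Z0" using no_self_rev[OF Z0] by simp
  have c: "card ({Z0, zz_rev Z0} \<inter> \<tau>) = 1" using zo Z0 unfolding z_orientation_def by blast
  have e0: "S \<phi> \<longleftrightarrow> Z0 \<in> \<tau>" unfolding S_def using uniq[OF _ Z0 _ i0] tau_sub i0 by blast
  have e1: "S (rfl \<phi>) \<longleftrightarrow> zz_rev Z0 \<in> \<tau>" unfolding S_def using uniq[OF _ Z1 _ i1] tau_sub i1 by blast
  have "Z0 \<in> \<tau> \<longleftrightarrow> zz_rev Z0 \<notin> \<tau>"
  proof (cases "Z0 \<in> \<tau>"; cases "zz_rev Z0 \<in> \<tau>")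
    assume "Z0 \<in> \<tau>" "zz_rev Z0 \<in> \<tau>"
    then have "{Z0, zz_rev Z0} \<inter> \<tau> = {Z0, zz_rev Z0}" by blast
    then show ?thesis using c neq by simp
  next
    assume "Z0 \<notin> \<tau>" "zz_rev Z0 \<notin> \<tau>"
    then have "{Z0, zz_rev Z0} \<inter> \<tau> = {}" by blast
    then show ?thesis using c by simp
  qed auto
  then show ?thesis using e0 e1 by blast
qed

end


lemma pow_nonneg:
  assumes "\<And>a b. P a b \<ge> 0"
  shows "mc_pow V P n u v \<ge> 0"
  by (induction n arbitrary: u) (auto intro!: sum_nonneg mult_nonneg_nonneg assms)

lemma pow_one:
  assumes "finite V" "v \<in> V"
  shows "mc_pow V P 1 u v = P u v"
  using assms by (simp add: if_distrib cong: if_cong)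

lemma pow_trans:
  assumes fin: "finite V" and nn: "\<And>a b. P a b \<ge> 0"
  shows "mc_pow V P m u w > 0 \<Longrightarrow> mc_pow V P n w v > 0 \<Longrightarrow> mc_pow V P (m + n) u v > 0"
proof (induction m arbitrary: u)
  case 0 then show ?case by (simp split: if_splits)
next
  case (Suc m)
  have sp: "(\<Sum>a\<in>V. P u a * mc_pow V P m a w) > 0" using Suc.prems(1) by simp
  have "\<exists>a\<in>V. P u a * mc_pow V P m a w > 0"
  proof (rule ccontr)
    assume "\<not> (\<exists>a\<in>V. P u a * mc_pow V P m a w > 0)"
    then have "\<And>a. a \<in> V \<Longrightarrow> P u a * mc_pow V P m a w \<le> 0" by (simp add: not_less)
    then have "(\<Sum>a\<in>V. P u a * mc_pow V P m a w) \<le> 0" by (rule sum_nonpos)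
    then show False using sp by simp
  qed
  then obtain a where a: "a \<in> V" "P u a * mc_pow V P m a w > 0" by blast
  have nn2: "mc_pow V P m a w \<ge> 0" by (rule pow_nonneg[OF nn])
  have pa: "P u a > 0" and pw: "mc_pow V P m a w > 0"
    using a(2) nn[of u a] nn2 by (auto simp: zero_less_mult_iff)
  have ih: "mc_pow V P (m + n) a v > 0" using Suc.IH[OF pw Suc.prems(2)] .
  have "P u a * mc_pow V P (m + n) a v \<le> (\<Sum>b\<in>V. P u b * mc_pow V P (m + n) b v)"
    by (rule member_le_sum[OF a(1) _ fin]) (intro mult_nonneg_nonneg nn pow_nonneg)
  moreover have "P u a * mc_pow V P (m + n) a v > 0" using pa ih by simp
  ultimately show ?case by simp
qed

context ztri begin

abbreviation "P \<equiv> mc_trans V E \<tau>"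

lemma P_nn: "P a b \<ge> 0" unfolding mc_trans_def by simp

lemma trav_sum:
  assumes f: "(x, y, z) \<in> flags F"
  shows "trav \<tau> y z + trav \<tau> z y = 2"
proof -
  have f2: "(x, z, y) \<in> flags F" using flag_perm(1)[OF f] .
  have f3: "(y, z, x) \<in> flags F" using flag_perm(3)[OF f] .
  have a: "S (z, y, x) \<longleftrightarrow> \<not> S (x, y, z)" using S_rfl[OF f] by (simp add: rfl_def)
  have b: "S (x, z, y) \<longleftrightarrow> \<not> S (y, z, x)" using S_rfl[OF f3] by (simp add: rfl_def)
  show ?thesis using trav_split[OF f] trav_split[OF f2] a b by simp
qed

lemma edge_flag:
  assumes e: "{y, z} \<in> E"
  shows "\<exists>x. (x, y, z) \<in> flags F"
proof -
  have "card {f\<in>F. {y, z} \<subseteq> f} = 2" using edge2[OF e] .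
  then have "{f\<in>F. {y, z} \<subseteq> f} \<noteq> {}" by (metis card.empty zero_neq_numeral)
  then obtain f where f: "f \<in> F" "{y, z} \<subseteq> f" by blast
  have yz: "y \<noteq> z" using edge_ne[OF e] .
  obtain t where t: "f = {y, z, t}" "t \<noteq> y" "t \<noteq> z"
    using card3_decomp[of f y z] faceD[OF f(1)] f(2) yz by auto
  have "{t, y, z} = f" using t(1) by blast
  then have "(t, y, z) \<in> flags F" unfolding flags_def using t yz f(1) by simp
  then show ?thesis by blast
qed

lemma R_pos:
  assumes e: "{y, z} \<in> E" and t: "trav \<tau> y z \<ge> 1"
  shows "P y z > 0"
proof -
  obtain x where f: "(x, y, z) \<in> flags F" using edge_flag[OF e] by blast
  have sum: "trav \<tau> y z + trav \<tau> z y = 2" using trav_sum[OF f] .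
  have zV: "z \<in> V" using flagD(10)[OF f] .
  have e': "{z, y} \<in> E" using e by (simp add: insert_commute)
  have finI: "finite {u\<in>V. typeI_edge E \<tau> y u}" and finII: "finite {u\<in>V. typeII_dir E \<tau> y u}"
    using finV by auto
  show ?thesis
  proof (cases "trav \<tau> y z = 1")
    case True
    then have tI: "typeI_edge E \<tau> y z" unfolding typeI_edge_def using e sum by simp
    then have "z \<in> {u\<in>V. typeI_edge E \<tau> y u}" using zV by simp
    then have "card {u\<in>V. typeI_edge E \<tau> y u} > 0" using finI by (auto simp: card_gt_0_iff)
    then have "mc_deg V E \<tau> y > 0" unfolding mc_deg_def by simp
    then show ?thesis unfolding mc_trans_def using tI by simp
  next
    case False
    then have t2: "trav \<tau> y z = 2" "trav \<tau> z y = 0" using sum t by auto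
    then have tII: "typeII_dir E \<tau> y z" unfolding typeII_dir_def using e by simp
    have ntI: "\<not> typeI_edge E \<tau> y z" unfolding typeI_edge_def using t2 by simp
    have "z \<in> {u\<in>V. typeII_dir E \<tau> y u}" using zV tII by simp
    then have "card {u\<in>V. typeII_dir E \<tau> y u} > 0" using finII by (auto simp: card_gt_0_iff)
    then have "mc_deg V E \<tau> y > 0" unfolding mc_deg_def by simp
    then show ?thesis unfolding mc_trans_def using tII ntI by simp
  qed
qed

lemma face_ret:
  assumes f: "(x, y, z) \<in> flags F" and t: "trav \<tau> y z = 2"
  shows "P z x > 0" "P x y > 0"
proof -
  have s: "S (y, z, x)" "S (x, y, z)" using trav_split[OF f] t by (auto split: if_splits)
  have f3: "(y, z, x) \<in> flags F" using flag_perm(3)[OF f] .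
  have f4: "(z, x, y) \<in> flags F" using flag_perm(4)[OF f] .
  have "trav \<tau> z x \<ge> 1" using trav_split[OF f3] s by simp
  then show "P z x > 0" using R_pos flagD(6)[OF f3] by blast
  have "trav \<tau> x y \<ge> 1" using trav_split[OF f4] s by simp
  then show "P x y > 0" using R_pos flagD(6)[OF f4] by blast
qed

lemma step1: "P a b > 0 \<Longrightarrow> b \<in> V \<Longrightarrow> mc_pow V P 1 a b > 0"
  using pow_one[OF finV] by simp

lemma P_nn': "\<And>a b. P a b \<ge> 0" by (rule P_nn)

lemma ptrans: "mc_pow V P m u w > 0 \<Longrightarrow> mc_pow V P n w v > 0 \<Longrightarrow> mc_pow V P (m + n) u v > 0"
  by (rule pow_trans[OF finV P_nn'])

lemma edge_reach:
  assumes e: "{y, z} \<in> E"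
  shows "\<exists>k. mc_pow V P k y z > 0"
proof -
  obtain x where f: "(x, y, z) \<in> flags F" using edge_flag[OF e] by blast
  have sum: "trav \<tau> y z + trav \<tau> z y = 2" using trav_sum[OF f] .
  show ?thesis
  proof (cases "trav \<tau> y z \<ge> 1")
    case True
    then show ?thesis using step1[OF R_pos[OF e True] flagD(10)[OF f]] by blast
  next
    case False
    then have t: "trav \<tau> z y = 2" using sum by simp
    have f2: "(x, z, y) \<in> flags F" using flag_perm(1)[OF f] .
    have "mc_pow V P 1 y x > 0" using step1[OF face_ret(1)[OF f2 t] flagD(8)[OF f]] .
    moreover have "mc_pow V P 1 x z > 0" using step1[OF face_ret(2)[OF f2 t] flagD(10)[OF f]] .
    ultimately show ?thesis using ptrans by blast
  qed
qed

lemma irred: "irreducible_chain V P"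
  unfolding irreducible_chain_def
proof (intro ballI)
  fix u v assume u: "u \<in> V" and v: "v \<in> V"
  have "(u, v) \<in> {(x, y). {x, y} \<in> E}\<^sup>*" using conn[OF u v] .
  then show "\<exists>n. mc_pow V P n u v > 0"
  proof (induction rule: rtrancl_induct)
    case base
    have "mc_pow V P 0 u u > 0" by simp
    then show ?case by blast
  next
    case (step y z)
    obtain n where n: "mc_pow V P n u y > 0" using step.IH by blast
    obtain k where k: "mc_pow V P k y z > 0" using edge_reach step.hyps(2) by auto
    show ?case using ptrans[OF n k] by blast
  qed
qed

lemma cyc3:
  assumes "P a b > 0" "P b c > 0" "P c a > 0" "a \<in> V" "b \<in> V" "c \<in> V"
  shows "mc_pow V P 3 a a > 0"
proof -
  have "mc_pow V P (1 + (1 + 1)) a a > 0"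
    using ptrans[OF step1[OF assms(1,5)] ptrans[OF step1[OF assms(2,6)] step1[OF assms(3,4)]]] .
  then show ?thesis by (simp add: numeral_3_eq_3)
qed

lemma aper:
  assumes "\<exists>f\<in>F. face_typeI E \<tau> f"
  shows "aperiodic_chain V P"
proof -
  obtain f where fF: "f \<in> F" and ft: "face_typeI E \<tau> f" using assms by blast
  have c2: "card {e\<in>E. e \<subseteq> f \<and> (\<exists>u v. e = {u, v} \<and> typeII_dir E \<tau> u v)} = 1"
    and c1: "card {e\<in>E. e \<subseteq> f \<and> (\<exists>u v. e = {u, v} \<and> typeI_edge E \<tau> u v)} = 2"
    using ft unfolding face_typeI_def by auto
  have "{e\<in>E. e \<subseteq> f \<and> (\<exists>u v. e = {u, v} \<and> typeII_dir E \<tau> u v)} \<noteq> {}"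
    using c2 by (metis card.empty zero_neq_one)
  then obtain u v where uv: "{u, v} \<subseteq> f" "typeII_dir E \<tau> u v" by blast
  have "{e\<in>E. e \<subseteq> f \<and> (\<exists>u v. e = {u, v} \<and> typeI_edge E \<tau> u v)} \<noteq> {}"
    using c1 by (metis card.empty zero_neq_numeral)
  then obtain p q where pq: "{p, q} \<subseteq> f" "typeI_edge E \<tau> p q" by blast
  have euv: "{u, v} \<in> E" and tuv: "trav \<tau> u v = 2" using uv(2) unfolding typeII_dir_def by auto
  have epq: "{p, q} \<in> E" and tpq: "trav \<tau> p q = 1" "trav \<tau> q p = 1" using pq(2) unfolding typeI_edge_def by auto
  have uvne: "u \<noteq> v" using edge_ne[OF euv] .
  obtain w where w: "f = {u, v, w}" "w \<noteq> u" "w \<noteq> v"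
    using card3_decomp[of f u v] faceD[OF fF] uv(1) uvne by auto
  have "{w, u, v} = f" using w(1) by blast
  then have fl: "(w, u, v) \<in> flags F" unfolding flags_def using w uvne fF by auto
  have Puv: "P u v > 0" using R_pos[OF euv] tuv by simp
  have Pvw: "P v w > 0" and Pwu: "P w u > 0" using face_ret[OF fl tuv] by auto
  have V: "u \<in> V" "v \<in> V" "w \<in> V" using flagD(8-10)[OF fl] by auto
  have epq': "{q, p} \<in> E" using epq by (simp add: insert_commute)
  have Ppq: "P p q > 0" using R_pos[OF epq] tpq by simp
  have Pqp: "P q p > 0" using R_pos[OF epq'] tpq by simp
  have pV: "p \<in> V" and qV: "q \<in> V" using edgeD[OF epq] by auto
  have two: "mc_pow V P 2 p p > 0"
    using ptrans[OF step1[OF Ppq qV] step1[OF Pqp pV]] by (simp add: numeral_2_eq_2)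
  have "p \<in> {u, v, w}" using pq(1) w(1) by blast
  then have three: "mc_pow V P 3 p p > 0"
    using cyc3[OF Puv Pvw Pwu V] cyc3[OF Pvw Pwu Puv V(2,3,1)] cyc3[OF Pwu Puv Pvw V(3,1,2)] by auto
  show ?thesis
    unfolding aperiodic_chain_def
  proof
    fix x assume x: "x \<in> V"
    obtain a where a: "mc_pow V P a x p > 0" using irred x pV unfolding irreducible_chain_def by blast
    obtain b where b: "mc_pow V P b p x > 0" using irred x pV unfolding irreducible_chain_def by blast
    let ?A = "{n. 0 < n \<and> mc_pow V P n x x > 0}"
    have "mc_pow V P (a + 2 + b) x x > 0" using ptrans[OF ptrans[OF a two] b] .
    then have i1: "a + 2 + b \<in> ?A" by simp
    have h: "mc_pow V P (a + 3 + b) x x > 0" using ptrans[OF ptrans[OF a three] b] .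
    have eq: "a + 3 + b = Suc (a + 2 + b)" by simp
    have h2: "mc_pow V P (Suc (a + 2 + b)) x x > 0" using h unfolding eq .
    have i2: "Suc (a + 2 + b) \<in> ?A" unfolding mem_Collect_eq by (rule conjI[OF zero_less_Suc h2])
    have d1: "Gcd ?A dvd (a + 2 + b)" using Gcd_dvd[OF i1] .
    have d2: "Gcd ?A dvd Suc (a + 2 + b)" using Gcd_dvd[OF i2] .
    have "Gcd ?A dvd (Suc (a + 2 + b) - (a + 2 + b))" using dvd_diff_nat[OF d2 d1] .
    then show "Gcd ?A = 1" by simp
  qed
qed

lemma ergodic: "\<exists>f\<in>F. face_typeI E \<tau> f \<Longrightarrow> ergodic_chain V P"
  unfolding ergodic_chain_def using irred aper by blast

end

theorem proposition3:
  fixes V :: "'a set" and E F :: "'a set set" and \<tau> :: "'a list set set"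
  assumes "triangulation V E F"
    and "z_orientation E F \<tau>"
    and "\<exists>f\<in>F. face_typeI E \<tau> f"
  shows "ergodic_chain V (mc_trans V E \<tau>)"
proof -
  interpret ztri V E F \<tau> using assms(1,2) by unfold_locales
  show ?thesis using ergodic[OF assms(3)] .
qed


end
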